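(* Let $n\ge 1$ and $1\le k\le d$ be integers, set $p=k/d$, and let $\mathbf{x}_1,\dots,\mathbf{x}_n\in\mathbb{R}^d$ with $\mathbf{x}_i=(x_{i1},\dots,x_{id})$. Each node $i$ independently chooses a uniformly random subset $S_i\subseteq\{1,\dots,d\}$ of size $k$, and sets $h_{ij}=x_{ij}$ if $j\in S_i$ and $h_{ij}=0$ otherwise. For each coordinate $j$ let $M_j=|\{i: j\in S_i\}|$. Let $T:\{1,\dots,n\}\to\mathbb{R}\setminus\{0\}$ be any function such that $$\bar\beta=\Big(\sum_{m=1}^{n}\frac{k}{d\,T(m)}\binom{n-1}{m-1}p^{m-1}(1-p)^{n-m}\Big)^{-1}$$ is well defined (i.e. the sum is nonzero). Define the Rand-$k$-Spatial estimate of coordinate $j$ by $\hat{x}_j=\frac{1}{n}\frac{\bar\beta}{T(M_j)}\sum_{i=1}^n h_{ij}$ if $M_j\ge 1$ and $\hat{x}_j=0$ if $M_j=0$. Then for every $j$, $\mathbb{E}[\hat{x}_j]=\frac{1}{n}\sum_{i=1}^n x_{ij}$, where the expectation is over the random subsets $S_1,\dots,S_n$.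
   Context: This is the Rand-$k$-Spatial family of estimators for distributed sparsified mean estimation: the server receives only the sparsified vectors $\mathbf{h}_i=(h_{i1},\dots,h_{id})$ (with positions) and estimates the mean $\bar{\mathbf{x}}=\frac1n\sum_i\mathbf{x}_i$. The weights $\binom{n-1}{m-1}p^{m-1}(1-p)^{n-m}$ are the probabilities that $M_j=m$ conditional on a fixed node having sent coordinate $j$. *)

theory Defs
  imports "HOL-Probability.Probability"
begin

text \<open>Nodes are indexed by 1..n, coordinates by 1..d. A vector family is
  x :: nat => nat => real, with x i j the j-th coordinate of node i.\<close>

definition k_subsets :: "nat \<Rightarrow> nat \<Rightarrow> nat set set" where
  "k_subsets d k = {S. S \<subseteq> {1..d} \<and> card S = k}"

definition subset_choice_pmf :: "nat \<Rightarrow> nat \<Rightarrow> nat \<Rightarrow> (nat \<Rightarrow> nat set) pmf" where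
  "subset_choice_pmf n d k = Pi_pmf {1..n} {} (\<lambda>_. pmf_of_set (k_subsets d k))"

definition sparsified :: "(nat \<Rightarrow> nat \<Rightarrow> real) \<Rightarrow> (nat \<Rightarrow> nat set) \<Rightarrow> nat \<Rightarrow> nat \<Rightarrow> real" where
  "sparsified x S i j = (if j \<in> S i then x i j else 0)"

definition count_M :: "nat \<Rightarrow> (nat \<Rightarrow> nat set) \<Rightarrow> nat \<Rightarrow> nat" where
  "count_M n S j = card {i \<in> {1..n}. j \<in> S i}"

definition beta_sum :: "nat \<Rightarrow> nat \<Rightarrow> nat \<Rightarrow> (nat \<Rightarrow> real) \<Rightarrow> real" where
  "beta_sum n d k T = (let p = real k / real d in
     (\<Sum>m=1..n. real k / (real d * T m) * real ((n - 1) choose (m - 1))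
                 * p ^ (m - 1) * (1 - p) ^ (n - m)))"

definition beta_bar :: "nat \<Rightarrow> nat \<Rightarrow> nat \<Rightarrow> (nat \<Rightarrow> real) \<Rightarrow> real" where
  "beta_bar n d k T = inverse (beta_sum n d k T)"

definition rand_k_spatial_est ::
  "nat \<Rightarrow> nat \<Rightarrow> nat \<Rightarrow> (nat \<Rightarrow> real) \<Rightarrow> (nat \<Rightarrow> nat \<Rightarrow> real) \<Rightarrow> (nat \<Rightarrow> nat set) \<Rightarrow> nat \<Rightarrow> real" where
  "rand_k_spatial_est n d k T x S j =
     (if count_M n S j \<ge> 1
      then (1 / real n) * (beta_bar n d k T / T (count_M n S j)) * (\<Sum>i=1..n. sparsified x S i j)
      else 0)"

end

theory Submission
  imports Defs
begin


lemma card_K1: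
  assumes "1 \<le> k" "j \<in> {1..d}"
  shows "card {S \<in> k_subsets d k. j \<in> S} = (d - 1) choose (k - 1)"
proof -
  let ?B = "{T. T \<subseteq> {1..d} - {j} \<and> card T = k - 1}"
  have eq: "{S \<in> k_subsets d k. j \<in> S} = insert j ` ?B"
  proof (intro equalityI subsetI)
    fix S assume S: "S \<in> {S \<in> k_subsets d k. j \<in> S}"
    hence "S = insert j (S - {j})" by auto
    moreover have "S - {j} \<in> ?B"
    proof -
      have "S \<subseteq> {1..d}" "card S = k" "j \<in> S" using S by (auto simp: k_subsets_def)
      moreover have "finite S" using \<open>S \<subseteq> {1..d}\<close> finite_subset by blast
      ultimately show ?thesis by auto
    qed
    ultimately show "S \<in> insert j ` ?B" by blast
  next
    fix S assume "S \<in> insert j ` ?B"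
    then obtain T where T: "T \<in> ?B" "S = insert j T" by blast
    have "T \<subseteq> {1..d}" using T by auto
    hence "finite T" using finite_subset by blast
    moreover have "j \<notin> T" using T by auto
    ultimately have "card S = Suc (k - 1)" using T by simp
    hence "card S = k" using assms by simp
    thus "S \<in> {S \<in> k_subsets d k. j \<in> S}" using T assms by (auto simp: k_subsets_def)
  qed
  have inj: "inj_on (insert j) ?B"
  proof (rule inj_onI)
    fix X Y assume X: "X \<in> ?B" and Y: "Y \<in> ?B" and e: "insert j X = insert j Y"
    have "j \<notin> X" "j \<notin> Y" using X Y by auto
    hence "X = insert j X - {j}" "Y = insert j Y - {j}" by auto
    thus "X = Y" using e by simp
  qed
  have "card {S \<in> k_subsets d k. j \<in> S} = card ?B" unfolding eq by (rule card_image[OF inj])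
  also have "\<dots> = card ({1..d} - {j}) choose (k - 1)" by (rule n_subsets) simp
  also have "card ({1..d} - {j}) = d - 1" using assms by simp
  finally show ?thesis .
qed

lemma map_ksub:
  assumes "1 \<le> k" "k \<le> d" "j \<in> {1..d}"
  shows "map_pmf (\<lambda>s. j \<in> s) (pmf_of_set (k_subsets d k)) = bernoulli_pmf (real k / real d)"
proof -
  let ?K = "k_subsets d k"
  have cK: "card ?K = d choose k" unfolding k_subsets_def using n_subsets[of "{1..d}" k] by simp
  have fin: "finite ?K" unfolding k_subsets_def by (rule finite_subset[of _ "Pow {1..d}"]) auto
  have pos: "card ?K > 0" using cK assms by simp
  hence ne: "?K \<noteq> {}" by auto
  have key: "real (card {S \<in> ?K. j \<in> S}) / real (card ?K) = real k / real d"
  proof -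
    have "k * (d choose k) = d * ((d - 1) choose (k - 1))" using assms times_binomial_minus1_eq[of k d] by linarith
    hence "real k * real (d choose k) = real d * real ((d - 1) choose (k - 1))" by (metis of_nat_mult)
    moreover have "real d > 0" using assms by simp
    ultimately show ?thesis using cK card_K1[OF assms(1,3)] pos
      by (simp add: divide_simps)
  qed
  have p01: "0 \<le> real k / real d" "real k / real d \<le> 1" using assms by auto
  show ?thesis
  proof (rule pmf_eqI)
    fix b :: bool
    have "pmf (map_pmf (\<lambda>s. j \<in> s) (pmf_of_set ?K)) b = measure (pmf_of_set ?K) {s. (j \<in> s) = b}"
      by (simp add: pmf_map vimage_def)
    also have "\<dots> = real (card (?K \<inter> {s. (j \<in> s) = b})) / real (card ?K)"
      using measure_pmf_of_set[OF ne fin] by simp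
    also have "\<dots> = (if b then real k / real d else 1 - real k / real d)"
    proof (cases b)
      case True
      then show ?thesis using key by (simp add: Int_def conj_commute)
    next
      case False
      have "?K \<inter> {s. (j \<in> s) = b} = ?K - {S \<in> ?K. j \<in> S}" using False by auto
      hence "card (?K \<inter> {s. (j \<in> s) = b}) = card ?K - card {S \<in> ?K. j \<in> S}"
        using fin by (simp add: card_Diff_subset finite_subset)
      moreover have "card {S \<in> ?K. j \<in> S} \<le> card ?K" using fin by (intro card_mono) auto
      ultimately show ?thesis using False key pos by (simp add: of_nat_diff diff_divide_distrib)
    qed
    also have "\<dots> = pmf (bernoulli_pmf (real k / real d)) b" using p01 by simp
    finally show "pmf (map_pmf (\<lambda>s. j \<in> s) (pmf_of_set ?K)) b = pmf (bernoulli_pmf (real k / real d)) b" .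
  qed
qed



lemma fin_bool_funs:
  assumes "finite A"
  shows "finite {f :: 'a \<Rightarrow> bool. \<forall>x. x \<notin> A \<longrightarrow> f x = False}"
proof (rule finite_subset)
  show "{f :: 'a \<Rightarrow> bool. \<forall>x. x \<notin> A \<longrightarrow> f x = False} \<subseteq> (\<lambda>S x. x \<in> S) ` Pow A"
  proof
    fix f :: "'a \<Rightarrow> bool" assume f: "f \<in> {f. \<forall>x. x \<notin> A \<longrightarrow> f x = False}"
    have "f = (\<lambda>x. x \<in> {x\<in>A. f x})" using f by auto
    thus "f \<in> (\<lambda>S x. x \<in> S) ` Pow A" by blast
  qed
  show "finite ((\<lambda>S x. x \<in> S) ` Pow A)" using assms by simp
qed

lemma finite_set_Pi_bool:
  assumes "finite A"
  shows "finite (set_pmf (Pi_pmf A False (q :: 'a \<Rightarrow> bool pmf)))"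
  using set_Pi_pmf_subset[OF assms, of False q] fin_bool_funs[OF assms] finite_subset by blast

lemma EH:
  fixes A :: "nat set" and phi :: "nat \<Rightarrow> real"
  assumes fA: "finite A" and iA: "i \<notin> A" and p: "0 \<le> p" "p \<le> 1"
  shows "measure_pmf.expectation (Pi_pmf (insert i A) False (\<lambda>_. bernoulli_pmf p))
           (\<lambda>b. if b i then phi (card {l \<in> insert i A. b l}) else 0)
       = p * (\<Sum>m\<le>card A. phi (Suc m) * (real (card A choose m) * p^m * (1-p)^(card A - m)))"
proof -
  let ?Q = "Pi_pmf A False (\<lambda>_. bernoulli_pmf p)"
  let ?h = "\<lambda>b. if b i then phi (card {l \<in> insert i A. b l}) else 0"
  have eq: "Pi_pmf (insert i A) False (\<lambda>_. bernoulli_pmf p) = bernoulli_pmf p \<bind> (\<lambda>y. map_pmf (\<lambda>f. f(i:=y)) ?Q)"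
    by (subst Pi_pmf_insert'[OF fA iA]) (simp add: map_pmf_def)
  have finQ: "finite (set_pmf ?Q)" by (rule finite_set_Pi_bool[OF fA])
  have "measure_pmf.expectation (bernoulli_pmf p \<bind> (\<lambda>y. map_pmf (\<lambda>f. f(i:=y)) ?Q)) ?h
      = (\<Sum>a\<in>UNIV. pmf (bernoulli_pmf p) a *\<^sub>R measure_pmf.expectation (map_pmf (\<lambda>f. f(i:=a)) ?Q) ?h)"
    by (rule pmf_expectation_bind) (use finQ in auto)
  also have "\<dots> = p * measure_pmf.expectation ?Q (\<lambda>f. ?h (f(i:=True)))"
    using p by (simp add: UNIV_bool)
  also have "(\<lambda>f. ?h (f(i:=True))) = (\<lambda>f. phi (Suc (card {l \<in> A. f l})))"
  proof
    fix f :: "nat \<Rightarrow> bool"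
    have "{l \<in> insert i A. (f(i:=True)) l} = insert i {l \<in> A. f l}" using iA by auto
    thus "?h (f(i:=True)) = phi (Suc (card {l \<in> A. f l}))" using fA iA by simp
  qed
  also have "measure_pmf.expectation ?Q (\<lambda>f. phi (Suc (card {l \<in> A. f l})))
      = measure_pmf.expectation (map_pmf (\<lambda>f. card {l \<in> A. f l}) ?Q) (\<lambda>m. phi (Suc m))"
    by simp
  also have "map_pmf (\<lambda>f. card {l \<in> A. f l}) ?Q = binomial_pmf (card A) p"
    using binomial_pmf_altdef'[OF fA refl, of p False] p by simp
  also have "measure_pmf.expectation (binomial_pmf (card A) p) (\<lambda>m. phi (Suc m))
      = (\<Sum>m\<le>card A. phi (Suc m) * pmf (binomial_pmf (card A) p) m)"
    by (rule integral_measure_pmf_real) (use p in \<open>auto simp: set_pmf_binomial_eq split: if_splits\<close>)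
  also have "\<dots> = (\<Sum>m\<le>card A. phi (Suc m) * (real (card A choose m) * p^m * (1-p)^(card A - m)))"
    using p by simp
  finally show ?thesis unfolding eq .
qed



theorem lemma2:
  fixes n d k j :: nat and T :: "nat \<Rightarrow> real" and x :: "nat \<Rightarrow> nat \<Rightarrow> real"
  assumes "n \<ge> 1" and "1 \<le> k" and "k \<le> d"
    and "\<forall>m\<in>{1..n}. T m \<noteq> 0"
    and "beta_sum n d k T \<noteq> 0"
    and "j \<in> {1..d}"
  shows "measure_pmf.expectation (subset_choice_pmf n d k) (\<lambda>S. rand_k_spatial_est n d k T x S j)
         = (1 / real n) * (\<Sum>i=1..n. x i j)"
proof -
  define p where "p = real k / real d"
  have p01: "0 \<le> p" "p \<le> 1" using assms unfolding p_def by auto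
  define P where "P = subset_choice_pmf n d k"
  define B where "B = Pi_pmf {1..n} False (\<lambda>_. bernoulli_pmf p)"
  define H where "H = (\<lambda>i (b :: nat \<Rightarrow> bool). if b i then 1 / T (card {l \<in> {1..n}. b l}) else 0)"
  define G where "G = (\<lambda>b. (1 / real n) * beta_bar n d k T * (\<Sum>i=1..n. x i j * H i b))"
  have hB: "map_pmf (\<lambda>h. (\<lambda>s. j \<in> s) \<circ> h) P = B"
  proof -
    have "B = Pi_pmf {1..n} False (\<lambda>_. map_pmf (\<lambda>s. j \<in> s) (pmf_of_set (k_subsets d k)))"
      unfolding B_def p_def using map_ksub[OF assms(2,3,6)] by simp
    also have "\<dots> = map_pmf (\<lambda>h. (\<lambda>s. j \<in> s) \<circ> h) P"
      unfolding P_def subset_choice_pmf_def by (rule Pi_pmf_map) auto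
    finally show ?thesis by simp
  qed
  have pw: "rand_k_spatial_est n d k T x S j = G ((\<lambda>s. j \<in> s) \<circ> S)" for S
  proof -
    have cM: "card {l \<in> {1..n}. ((\<lambda>s. j \<in> s) \<circ> S) l} = count_M n S j"
      unfolding count_M_def by simp
    have Hrw: "H i ((\<lambda>s. j \<in> s) \<circ> S) = (if j \<in> S i then 1 / T (count_M n S j) else 0)" for i
      unfolding H_def cM by (simp only: comp_apply)
    have G1: "G ((\<lambda>s. j \<in> s) \<circ> S) = (1 / real n) * beta_bar n d k T *
        (\<Sum>i=1..n. x i j * (if j \<in> S i then 1 / T (count_M n S j) else 0))"
      unfolding G_def Hrw ..
    show ?thesis
    proof (cases "count_M n S j \<ge> 1")
      case True
      have "rand_k_spatial_est n d k T x S j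
          = (1 / real n) * (beta_bar n d k T / T (count_M n S j)) * (\<Sum>i=1..n. sparsified x S i j)"
        unfolding rand_k_spatial_est_def using True by (rule if_P)
      also have "\<dots> = (1 / real n) * beta_bar n d k T * ((1 / T (count_M n S j)) * (\<Sum>i=1..n. sparsified x S i j))"
        by (simp only: mult.assoc times_divide_eq_right mult_1_right times_divide_eq_left divide_divide_eq_left) 
      also have "(1 / T (count_M n S j)) * (\<Sum>i=1..n. sparsified x S i j)
          = (\<Sum>i=1..n. x i j * (if j \<in> S i then 1 / T (count_M n S j) else 0))"
        unfolding sum_distrib_left
        by (rule sum.cong[OF refl]) (simp add: sparsified_def)
      finally show ?thesis unfolding G1 .
    next
      case False
      have c0: "card {i \<in> {1..n}. j \<in> S i} = 0"
        using False unfolding count_M_def by (simp only: not_le less_one)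
      have fin: "finite {i \<in> {1..n}. j \<in> S i}" by (rule finite_subset[of _ "{1..n}"]) auto
      have e: "{i \<in> {1..n}. j \<in> S i} = {}" using c0 card_0_eq[OF fin] by (simp only:)
      have "(\<Sum>i=1..n. x i j * (if j \<in> S i then 1 / T (count_M n S j) else 0)) = 0"
      proof (rule sum.neutral, intro ballI)
        fix i assume i: "i \<in> {1..n}"
        have "j \<notin> S i"
        proof
          assume "j \<in> S i"
          hence "i \<in> {i \<in> {1..n}. j \<in> S i}" using i by (simp only: mem_Collect_eq simp_thms)
          thus False unfolding e by (simp only: empty_iff)
        qed
        thus "x i j * (if j \<in> S i then 1 / T (count_M n S j) else 0) = 0" by simp
      qed
      moreover have "rand_k_spatial_est n d k T x S j = 0"
        unfolding rand_k_spatial_est_def using False by (rule if_not_P)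
      ultimately show ?thesis unfolding G1 by (simp only: mult_zero_right)
    qed
  qed
  have EHi: "measure_pmf.expectation B (H i) = beta_sum n d k T" if i: "i \<in> {1..n}" for i
  proof -
    let ?A = "{1..n} - {i}"
    have ins: "insert i ?A = {1..n}" using i by blast
    have cA: "card ?A = n - 1" using i by (simp add: card_Diff_singleton)
    have finA: "finite ?A" by simp
    have iA: "i \<notin> ?A" by blast
    have "measure_pmf.expectation B (H i)
        = measure_pmf.expectation (Pi_pmf (insert i ?A) False (\<lambda>_. bernoulli_pmf p))
            (\<lambda>b. if b i then 1 / T (card {l \<in> insert i ?A. b l}) else 0)"
      unfolding ins B_def H_def ..
    also have "\<dots> = p * (\<Sum>m\<le>card ?A. 1 / T (Suc m) * (real (card ?A choose m) * p^m * (1-p)^(card ?A - m)))"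
      by (rule EH[of ?A i p "\<lambda>m. 1 / T m", OF finA iA p01])
    also have "\<dots> = (\<Sum>m<n. p / T (Suc m) * real ((n - 1) choose m) * p ^ m * (1 - p) ^ (n - Suc m))"
    proof -
      have r: "{..card ?A} = {..<n}" using cA assms(1) by auto
      show ?thesis unfolding r sum_distrib_left
      proof (rule sum.cong[OF refl])
        fix m assume "m \<in> {..<n}"
        have "card ?A - m = n - Suc m" using cA by simp
        thus "p * (1 / T (Suc m) * (real (card ?A choose m) * p ^ m * (1 - p) ^ (card ?A - m)))
            = p / T (Suc m) * real ((n - 1) choose m) * p ^ m * (1 - p) ^ (n - Suc m)"
          unfolding cA by (simp only: divide_inverse mult_1_left mult.assoc)
      qed
    qed
    also have "\<dots> = beta_sum n d k T"
    proof -
      have "beta_sum n d k T = (\<Sum>m=Suc 0..n. p / T m * real ((n - 1) choose (m - 1))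
                 * p ^ (m - 1) * (1 - p) ^ (n - m))"
        unfolding beta_sum_def Let_def p_def One_nat_def
        by (rule sum.cong[OF refl]) (simp only: divide_divide_eq_left)
      also have "\<dots> = (\<Sum>m<n. p / T (Suc m) * real ((n - 1) choose m)
                 * p ^ m * (1 - p) ^ (n - Suc m))"
        by (subst sum.atLeast1_atMost_eq) (simp only: diff_Suc_1)
      finally show ?thesis by (rule sym)
    qed
    finally show ?thesis .
  qed
  have finB: "finite (set_pmf B)" unfolding B_def by (rule finite_set_Pi_bool) simp
  have "measure_pmf.expectation P (\<lambda>S. rand_k_spatial_est n d k T x S j)
      = measure_pmf.expectation P (\<lambda>S. G ((\<lambda>s. j \<in> s) \<circ> S))" by (intro Bochner_Integration.integral_cong refl pw)
  also have "\<dots> = measure_pmf.expectation (map_pmf (\<lambda>h. (\<lambda>s. j \<in> s) \<circ> h) P) G" by (rule integral_map_pmf[symmetric])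
  also have "\<dots> = measure_pmf.expectation B G" unfolding hB ..
  also have "\<dots> = (1 / real n) * beta_bar n d k T * (\<Sum>i=1..n. x i j * measure_pmf.expectation B (H i))"
  proof -
    have "measure_pmf.expectation B (\<lambda>b. \<Sum>i=1..n. x i j * H i b)
        = (\<Sum>i=1..n. measure_pmf.expectation B (\<lambda>b. x i j * H i b))"
      by (rule Bochner_Integration.integral_sum) (rule integrable_measure_pmf_finite[OF finB])
    also have "\<dots> = (\<Sum>i=1..n. x i j * measure_pmf.expectation B (H i))"
      by (rule sum.cong[OF refl]) (rule integral_mult_right_zero)
    finally show ?thesis unfolding G_def by (simp only: integral_mult_right_zero)
  qed
  also have "\<dots> = (1 / real n) * beta_bar n d k T * (\<Sum>i=1..n. x i j * beta_sum n d k T)"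
    using EHi by (intro arg_cong[where f="\<lambda>t. (1 / real n) * beta_bar n d k T * t"] sum.cong refl) simp
  also have "\<dots> = (1 / real n) * (\<Sum>i=1..n. x i j)"
  proof -
    have "beta_bar n d k T * beta_sum n d k T = 1" using assms(5) unfolding beta_bar_def by simp
    thus ?thesis unfolding sum_distrib_right[symmetric] by (metis mult.assoc mult.commute mult_1)
  qed
  finally show ?thesis unfolding P_def .
qed

end
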